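(* Consecutive reflection points of $\mathrm{OPT}$ (in its orientation) alternate between left reflection points and right reflection points.
   Context: Instance: vertical line segments $s_1,\dots,s_n$ in $\mathbb{R}^2$, each of length $1$, with pairwise distinct $x$-coordinates. A tour is a cyclic sequence of points $p_1,\dots,p_\sigma$, each on some segment, with every segment containing at least one $p_j$; the straight segments joining consecutive points are legs. $\mathrm{OPT}$ is a fixed minimum-cost tour, oriented, with no two consecutive points on the same segment (no vertical legs) and not self-crossing. A point $p_j$ of $\mathrm{OPT}$ on segment $s$ is a left (resp. right) reflection point if both incident legs lie in $x\le x(s)$ (resp. $x\ge x(s)$). *)

theory Defs
  imports "HOL-Analysis.Analysis"
begin

text \<open>An instance consists of n vertical
segments; segment i (for i < n) is {(a i, y) | b i \<le> y \<le> b i + 1}, i.e. it has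
x-coordinate a i and length 1. A tour is a non-empty list ps of points, read
cyclically (the list order is the orientation); leg j joins ps!j to ps!((j+1) mod length ps).\<close>

definition vseg :: "(nat \<Rightarrow> real) \<Rightarrow> (nat \<Rightarrow> real) \<Rightarrow> nat \<Rightarrow> (real \<times> real) set" where
  "vseg a b i = {(a i, y) | y. b i \<le> y \<and> y \<le> b i + 1}"

definition nxt :: "nat \<Rightarrow> nat \<Rightarrow> nat" where
  "nxt \<sigma> j = (j + 1) mod \<sigma>"

definition prv :: "nat \<Rightarrow> nat \<Rightarrow> nat" where
  "prv \<sigma> j = (j + \<sigma> - 1) mod \<sigma>"

definition is_tour :: "nat \<Rightarrow> (nat \<Rightarrow> real) \<Rightarrow> (nat \<Rightarrow> real) \<Rightarrow> (real \<times> real) list \<Rightarrow> bool" where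
  "is_tour n a b ps \<longleftrightarrow> ps \<noteq> [] \<and>
     (\<forall>j < length ps. \<exists>i < n. ps ! j \<in> vseg a b i) \<and>
     (\<forall>i < n. \<exists>j < length ps. ps ! j \<in> vseg a b i)"

definition tour_cost :: "(real \<times> real) list \<Rightarrow> real" where
  "tour_cost ps = (\<Sum>j < length ps. dist (ps ! j) (ps ! nxt (length ps) j))"

definition leg :: "(real \<times> real) list \<Rightarrow> nat \<Rightarrow> (real \<times> real) set" where
  "leg ps j = closed_segment (ps ! j) (ps ! nxt (length ps) j)"

definition no_same_seg_consecutive :: "nat \<Rightarrow> (nat \<Rightarrow> real) \<Rightarrow> (nat \<Rightarrow> real) \<Rightarrow> (real \<times> real) list \<Rightarrow> bool" where
  "no_same_seg_consecutive n a b ps \<longleftrightarrow>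
     (\<forall>j < length ps. \<forall>i < n. \<not> (ps ! j \<in> vseg a b i \<and> ps ! nxt (length ps) j \<in> vseg a b i))"

definition self_crossing :: "(real \<times> real) list \<Rightarrow> bool" where
  "self_crossing ps \<longleftrightarrow> (\<exists>j < length ps. \<exists>k < length ps. j \<noteq> k \<and>
     (let p = ps ! j; q = ps ! nxt (length ps) j; r = ps ! k; s = ps ! nxt (length ps) k in
       open_segment p q \<inter> open_segment r s \<noteq> {} \<and>
       (fst q - fst p) * (snd s - snd r) - (snd q - snd p) * (fst s - fst r) \<noteq> 0))"

definition left_refl :: "nat \<Rightarrow> (nat \<Rightarrow> real) \<Rightarrow> (nat \<Rightarrow> real) \<Rightarrow> (real \<times> real) list \<Rightarrow> nat \<Rightarrow> bool" where
  "left_refl n a b ps j \<longleftrightarrow> (\<exists>i < n. ps ! j \<in> vseg a b i \<and>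
     leg ps (prv (length ps) j) \<subseteq> {z. fst z \<le> a i} \<and> leg ps j \<subseteq> {z. fst z \<le> a i})"

definition right_refl :: "nat \<Rightarrow> (nat \<Rightarrow> real) \<Rightarrow> (nat \<Rightarrow> real) \<Rightarrow> (real \<times> real) list \<Rightarrow> nat \<Rightarrow> bool" where
  "right_refl n a b ps j \<longleftrightarrow> (\<exists>i < n. ps ! j \<in> vseg a b i \<and>
     leg ps (prv (length ps) j) \<subseteq> {z. fst z \<ge> a i} \<and> leg ps j \<subseteq> {z. fst z \<ge> a i})"

definition refl_pt :: "nat \<Rightarrow> (nat \<Rightarrow> real) \<Rightarrow> (nat \<Rightarrow> real) \<Rightarrow> (real \<times> real) list \<Rightarrow> nat \<Rightarrow> bool" where
  "refl_pt n a b ps j \<longleftrightarrow> left_refl n a b ps j \<or> right_refl n a b ps j"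

end

theory Submission
  imports Defs
begin

lemma cvx_le: "convex {z::real\<times>real. fst z \<le> c}"
proof -
  have "{z::real\<times>real. fst z \<le> c} = {z. inner (1::real,0::real) z \<le> c}"
    by (auto simp: inner_prod_def)
  then show ?thesis using convex_halfspace_le by metis
qed

lemma cvx_ge: "convex {z::real\<times>real. fst z \<ge> c}"
proof -
  have "{z::real\<times>real. fst z \<ge> c} = {z. inner (1::real,0::real) z \<ge> c}"
    by (auto simp: inner_prod_def)
  then show ?thesis using convex_halfspace_ge by metis
qed

lemma nxt_prv: "p < L \<Longrightarrow> nxt L (prv L p) = p"
  unfolding nxt_def prv_def
  by (metis Suc_diff_1 Suc_eq_plus1 add_gr_0 gr_implies_not0 linorder_neqE_nat mod_Suc_eq mod_add_self2 mod_less)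

lemma prv_lt: "0 < L \<Longrightarrow> prv L p < L" unfolding prv_def by simp
lemma nxt_lt: "0 < L \<Longrightarrow> nxt L p < L" unfolding nxt_def by simp

lemma fst_vseg: "p \<in> vseg a b i \<Longrightarrow> fst p = a i"
  unfolding vseg_def by auto

locale tsetup =
  fixes n :: nat and a b :: "nat \<Rightarrow> real" and ps :: "(real \<times> real) list"
  assumes inj: "inj_on a {..<n}"
    and tour: "is_tour n a b ps"
    and nv: "no_same_seg_consecutive n a b ps"
begin

abbreviation "L \<equiv> length ps"
abbreviation "F p \<equiv> fst (ps ! p)"

lemma Lpos: "0 < L" using tour unfolding is_tour_def by auto

lemma onseg: "p < L \<Longrightarrow> \<exists>i<n. ps ! p \<in> vseg a b i"
  using tour unfolding is_tour_def by auto

lemma neq: assumes "p < L" shows "F p \<noteq> F (nxt L p)"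
proof
  assume e: "F p = F (nxt L p)"
  obtain i where i: "i < n" "ps ! p \<in> vseg a b i" using onseg assms by blast
  obtain i' where i': "i' < n" "ps ! nxt L p \<in> vseg a b i'" using onseg nxt_lt Lpos by blast
  have "a i = a i'" using e i i' fst_vseg by metis
  then have "i = i'" using inj i i' by (auto dest: inj_onD)
  then show False using nv assms i i' unfolding no_same_seg_consecutive_def by blast
qed

lemma left_iff: assumes "p < L"
  shows "left_refl n a b ps p \<longleftrightarrow> F (prv L p) < F p \<and> F (nxt L p) < F p"
proof
  assume "left_refl n a b ps p"
  then obtain i where i: "ps ! p \<in> vseg a b i"
     "leg ps (prv L p) \<subseteq> {z. fst z \<le> a i}" "leg ps p \<subseteq> {z. fst z \<le> a i}"
    unfolding left_refl_def by blast
  have "ps ! prv L p \<in> leg ps (prv L p)" unfolding leg_def by simp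
  then have 1: "F (prv L p) \<le> F p" using i fst_vseg by fastforce
  have "ps ! nxt L p \<in> leg ps p" unfolding leg_def by simp
  then have 2: "F (nxt L p) \<le> F p" using i fst_vseg by fastforce
  have "F (prv L p) \<noteq> F p" using neq[OF prv_lt[OF Lpos]] nxt_prv[OF assms] by metis
  moreover have "F (nxt L p) \<noteq> F p" using neq[OF assms] by metis
  ultimately show "F (prv L p) < F p \<and> F (nxt L p) < F p" using 1 2 by auto
next
  assume h: "F (prv L p) < F p \<and> F (nxt L p) < F p"
  obtain i where i: "i < n" "ps ! p \<in> vseg a b i" using onseg assms by blast
  have fp: "F p = a i" using i fst_vseg by metis
  have "leg ps (prv L p) \<subseteq> {z. fst z \<le> a i}" unfolding leg_def nxt_prv[OF assms]
    by (rule closed_segment_subset) (use h fp cvx_le in auto)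
  moreover have "leg ps p \<subseteq> {z. fst z \<le> a i}" unfolding leg_def
    by (rule closed_segment_subset) (use h fp cvx_le in auto)
  ultimately show "left_refl n a b ps p" unfolding left_refl_def using i by blast
qed

lemma right_iff: assumes "p < L"
  shows "right_refl n a b ps p \<longleftrightarrow> F (prv L p) > F p \<and> F (nxt L p) > F p"
proof
  assume "right_refl n a b ps p"
  then obtain i where i: "ps ! p \<in> vseg a b i"
     "leg ps (prv L p) \<subseteq> {z. fst z \<ge> a i}" "leg ps p \<subseteq> {z. fst z \<ge> a i}"
    unfolding right_refl_def by blast
  have "ps ! prv L p \<in> leg ps (prv L p)" unfolding leg_def by simp
  then have 1: "F (prv L p) \<ge> F p" using i fst_vseg by fastforce
  have "ps ! nxt L p \<in> leg ps p" unfolding leg_def by simp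
  then have 2: "F (nxt L p) \<ge> F p" using i fst_vseg by fastforce
  have "F (prv L p) \<noteq> F p" using neq[OF prv_lt[OF Lpos]] nxt_prv[OF assms] by metis
  moreover have "F (nxt L p) \<noteq> F p" using neq[OF assms] by metis
  ultimately show "F (prv L p) > F p \<and> F (nxt L p) > F p" using 1 2 by auto
next
  assume h: "F (prv L p) > F p \<and> F (nxt L p) > F p"
  obtain i where i: "i < n" "ps ! p \<in> vseg a b i" using onseg assms by blast
  have fp: "F p = a i" using i fst_vseg by metis
  have "leg ps (prv L p) \<subseteq> {z. fst z \<ge> a i}" unfolding leg_def nxt_prv[OF assms]
    by (rule closed_segment_subset) (use h fp cvx_ge in auto)
  moreover have "leg ps p \<subseteq> {z. fst z \<ge> a i}" unfolding leg_def
    by (rule closed_segment_subset) (use h fp cvx_ge in auto)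
  ultimately show "right_refl n a b ps p" unfolding right_refl_def using i by blast
qed

end


lemma modfacts:
  fixes j k L :: nat
  assumes "j < L" "k < L" "j \<noteq> k"
  shows "0 < (k + L - j) mod L" "(j + (k + L - j) mod L) mod L = k"
proof -
  have e: "(j + (k + L - j) mod L) mod L = (j + (k + L - j)) mod L" by (simp add: mod_add_right_eq)
  also have "\<dots> = k" using assms by simp
  finally show "(j + (k + L - j) mod L) mod L = k" .
  show "0 < (k + L - j) mod L"
  proof (rule ccontr)
    assume "\<not> 0 < (k + L - j) mod L"
    then have "(k + L - j) mod L = 0" by simp
    then have "j mod L = k" using e assms by simp
    then show False using assms by simp
  qed
qed

lemma nxt_mod: "0 < L \<Longrightarrow> nxt L ((j + m) mod L) = (j + Suc m) mod L"
  unfolding nxt_def by (simp add: mod_Suc_eq)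

lemma prv_mod: "0 < L \<Longrightarrow> 0 < m \<Longrightarrow> prv L ((j + m) mod L) = (j + m - 1) mod L"
proof -
  assume L: "0 < L" and m: "0 < m"
  have "prv L ((j + m) mod L) = ((j + m) mod L + (L - 1)) mod L" unfolding prv_def using L by simp
  also have "\<dots> = (j + m + (L - 1)) mod L" by (simp add: mod_add_left_eq)
  also have "\<dots> = (j + m - 1 + L) mod L" using L m by (simp add: algebra_simps)
  also have "\<dots> = (j + m - 1) mod L" by simp
  finally show ?thesis .
qed

lemma chain_dec:
  fixes X :: "nat \<Rightarrow> real"
  assumes ne: "\<And>m. X m \<noteq> X (Suc m)"
    and st: "\<And>m. 0 < m \<Longrightarrow> m < d \<Longrightarrow> \<not> (X (m-1) > X m \<and> X (Suc m) > X m)"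
    and s0: "X (Suc 0) < X 0" and d0: "0 < d"
  shows "X d < X (d-1)"
proof -
  have "0 < m \<longrightarrow> m \<le> d \<longrightarrow> X m < X (m-1)" for m
  proof (induction m)
    case 0 then show ?case by simp
  next
    case (Suc m)
    show ?case
    proof (cases "m = 0")
      case True then show ?thesis using s0 by simp
    next
      case False
      show ?thesis
      proof (intro impI)
        assume "Suc m \<le> d"
        then have "X m < X (m-1)" using Suc.IH False by simp
        moreover have "\<not> (X (m-1) > X m \<and> X (Suc m) > X m)" using st[of m] False \<open>Suc m \<le> d\<close> by simp
        ultimately have "\<not> X (Suc m) > X m" by simp
        then show "X (Suc m) < X (Suc m - 1)" using ne[of m] by simp
      qed
    qed
  qed
  then show ?thesis using d0 by simp
qed

theorem corollary1:
  fixes n :: nat and a b :: "nat \<Rightarrow> real" and OPT :: "(real \<times> real) list"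
  assumes distinct_x: "inj_on a {..<n}"
    and tour: "is_tour n a b OPT"
    and optimal: "\<And>T. is_tour n a b T \<Longrightarrow> tour_cost OPT \<le> tour_cost T"
    and no_vertical: "no_same_seg_consecutive n a b OPT"
    and no_cross: "\<not> self_crossing OPT"
    and j: "j < length OPT" and k: "k < length OPT" and jk: "j \<noteq> k"
    and refl_j: "refl_pt n a b OPT j" and refl_k: "refl_pt n a b OPT k"
    and between: "\<And>m. 0 < m \<Longrightarrow> m < (k + length OPT - j) mod length OPT \<Longrightarrow>
                    \<not> refl_pt n a b OPT ((j + m) mod length OPT)"
  shows "(left_refl n a b OPT j \<and> right_refl n a b OPT k) \<or>
         (right_refl n a b OPT j \<and> left_refl n a b OPT k)"
proof -
  have TS: "tsetup n a b OPT" using distinct_x tour no_vertical by unfold_locales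
  define L where "L = length OPT"
  define d where "d = (k + L - j) mod L"
  define X where "X m = fst (OPT ! ((j + m) mod L))" for m
  have Lp: "0 < L" using tsetup.Lpos[OF TS] L_def by simp
  have d0: "0 < d" and dk: "(j + d) mod L = k" using modfacts[OF j k jk] d_def L_def by auto
  have j0: "(j + 0) mod L = j" using j L_def by simp
  have lt: "(j + m) mod L < L" for m using Lp by simp
  have nx: "fst (OPT ! nxt L ((j + m) mod L)) = X (Suc m)" for m using nxt_mod[OF Lp] X_def by simp
  have pv: "0 < m \<Longrightarrow> fst (OPT ! prv L ((j + m) mod L)) = X (m - 1)" for m
    using prv_mod[OF Lp] X_def by simp
  have ne: "X m \<noteq> X (Suc m)" for m using tsetup.neq[OF TS, OF lt[of m, unfolded L_def]] nx[of m] X_def L_def by simp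
  have LI: "left_refl n a b OPT ((j+m) mod L) \<longleftrightarrow> (0 < m \<longrightarrow> X (m-1) < X m) \<and> X (Suc m) < X m"
    if "0 < m" for m
    using tsetup.left_iff[OF TS, OF lt[of m, unfolded L_def]] nx[of m] pv[OF that] X_def L_def that by simp
  have RI: "right_refl n a b OPT ((j+m) mod L) \<longleftrightarrow> (0 < m \<longrightarrow> X (m-1) > X m) \<and> X (Suc m) > X m"
    if "0 < m" for m
    using tsetup.right_iff[OF TS, OF lt[of m, unfolded L_def]] nx[of m] pv[OF that] X_def L_def that by simp
  have LJ: "left_refl n a b OPT j \<Longrightarrow> X (Suc 0) < X 0"
    using tsetup.left_iff[OF TS, OF j] nx[of 0] j0 X_def L_def by simp
  have RJ: "right_refl n a b OPT j \<Longrightarrow> X (Suc 0) > X 0"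
    using tsetup.right_iff[OF TS, OF j] nx[of 0] j0 X_def L_def by simp
  have nr: "\<not> left_refl n a b OPT ((j+m) mod L) \<and> \<not> right_refl n a b OPT ((j+m) mod L)"
    if "0 < m" "m < d" for m
    using between[of m] that d_def L_def unfolding refl_pt_def by simp
  show ?thesis
  proof (cases "left_refl n a b OPT j")
    case True
    have "X d < X (d-1)"
    proof (rule chain_dec[where X=X and d=d])
      show "X (Suc 0) < X 0" using LJ True by simp
      show "0 < d" by (rule d0)
      show "X m \<noteq> X (Suc m)" for m by (rule ne)
      fix m assume "0 < m" "m < d"
      then show "\<not> (X (m-1) > X m \<and> X (Suc m) > X m)" using nr[of m] RI[of m] by simp
    qed
    then have "\<not> left_refl n a b OPT k" using LI[OF d0] dk d0 by simp
    then have "right_refl n a b OPT k" using refl_k unfolding refl_pt_def by simp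
    then show ?thesis using True by simp
  next
    case False
    then have rj: "right_refl n a b OPT j" using refl_j unfolding refl_pt_def by simp
    have "(\<lambda>m. - X m) d < (\<lambda>m. - X m) (d-1)"
    proof (rule chain_dec[where X="\<lambda>m. - X m" and d=d])
      show "- X (Suc 0) < - X 0" using RJ rj by simp
      show "0 < d" by (rule d0)
      fix m
      show "- X m \<noteq> - X (Suc m)" using ne[of m] by simp
      assume "0 < m" "m < d"
      then show "\<not> (- X (m-1) > - X m \<and> - X (Suc m) > - X m)" using nr[of m] LI[of m] by simp
    qed
    then have "X d > X (d-1)" by simp
    then have "\<not> right_refl n a b OPT k" using RI[OF d0] dk d0 by simp
    then have "left_refl n a b OPT k" using refl_k unfolding refl_pt_def by simp
    then show ?thesis using rj by simp
  qed
qed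

end
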